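(* Let $(X,d)$ be a metric space with probability measure $\mu$, let $Y$ be a countable set and $f:X\to Y$. Let $\kappa:\mathbb{Z}^+\to\mathbb{Z}^+$ satisfy $\sum_{n=1}^\infty \rho^{\kappa(n)}=\infty$ for every $0<\rho\le 1$. Let $\{z_n\}_{n\ge1}$ be generated by the process $\mathcal{S}(\kappa,\Phi)$ with the distance-to-sample-set heuristic $\Phi(x,S)=d(x,S)=\inf\{d(x,s): s\in S\}$, and let $\zeta_n$ be the nearest neighbor prediction function on $Z_n$. If $x\in\operatorname{supp}(\mu)$ is not an $f$-boundary point, then $\zeta_n(x)\to f(x)$ as $n\to\infty$ with probability one.
   Context: Setting: $(X,d)$ is a metric space equipped with a probability measure $\mu$; $Y$ is a countable set; $f:X\to Y$ is the "true function". For $y\in Y$, $X_y=f^{-1}(y)$. $B_\epsilon(x)$ is the open ball of radius $\epsilon$ about $x$. The support $\operatorname{supp}(\mu)$ is the set of $x\in X$ with $\mu(B_\epsilon(x))>0$ for all $\epsilon>0$. A point $b\in X$ is an $f$-boundary point iff $\mu(B_\epsilon(b)\cap(X\setminus X_{f(b)}))>0$ for every $\epsilon>0$. The process $\mathcal{S}(\kappa,\Phi)$, for a function $\kappa:\mathbb{Z}^+\to\mathbb{Z}^+$ and a selection heuristic $\Phi:X\times\mathcal{P}(X)\to\mathbb{R}\cup\{+\infty\}$: set $Z_0=\emptyset$; for $n=1,2,\dots$, draw a set of $\kappa(n)$ candidates independently at random according to $\mu$ (independently of everything before), let $z_n$ be a candidate $s$ maximizing $\Phi(s,Z_{n-1})$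 (ties broken uniformly at random), and set $Z_n=\{z_1,\dots,z_n\}$. Nearest neighbor prediction: $\zeta_n(x)=f(z_\iota)$ where $\iota=\arg\min_{i\le n}d(x,z_i)$, ties broken uniformly at random. *)

theory Defs
  imports "HOL-Probability.Probability" "HOL-Combinatorics.Permutations"
begin

definition mu_support :: "'a::metric_space measure \<Rightarrow> 'a set" where
  "mu_support \<mu> = {x. \<forall>\<epsilon>>0. measure \<mu> (ball x \<epsilon>) > 0}"

definition f_boundary_point :: "'a::metric_space measure \<Rightarrow> ('a \<Rightarrow> 'b) \<Rightarrow> 'a \<Rightarrow> bool" where
  "f_boundary_point \<mu> f b \<longleftrightarrow>
     (\<forall>\<epsilon>>0. measure \<mu> (ball b \<epsilon> \<inter> (space \<mu> - f -` {f b})) > 0)"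

text \<open>Distance-to-sample-set heuristic d(x,S) = inf of d(x,s) over s in S, valued in the
  extended reals (the infimum over the empty set is +infinity).\<close>
definition dist_to_set :: "'a::metric_space \<Rightarrow> 'a set \<Rightarrow> ereal" where
  "dist_to_set x S = (INF s\<in>S. ereal (dist x s))"

text \<open>If p is a uniformly random
  permutation of I (independent of v), this is a uniformly random maximiser (minimiser).\<close>
definition tie_argmax :: "('i \<Rightarrow> 'v::linorder) \<Rightarrow> 'i set \<Rightarrow> ('i \<Rightarrow> nat) \<Rightarrow> 'i" where
  "tie_argmax v I p = arg_min_on p {i \<in> I. \<forall>j\<in>I. v j \<le> v i}"

definition tie_argmin :: "('i \<Rightarrow> 'v::linorder) \<Rightarrow> 'i set \<Rightarrow> ('i \<Rightarrow> nat) \<Rightarrow> 'i" where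
  "tie_argmin v I p = arg_min_on p {i \<in> I. \<forall>j\<in>I. v i \<le> v j}"

text \<open>The process S(kappa,Phi). c n i (i < kappa n) is the i-th candidate drawn at step n,
  p n is the tie-breaking permutation of the candidate indices at step n.
  sample_list kappa Phi c p n = [z_1, ..., z_n], so Z_n = set (sample_list ... n).\<close>
primrec sample_list ::
  "(nat \<Rightarrow> nat) \<Rightarrow> ('a \<Rightarrow> 'a set \<Rightarrow> ereal) \<Rightarrow> (nat \<Rightarrow> nat \<Rightarrow> 'a) \<Rightarrow> (nat \<Rightarrow> nat \<Rightarrow> nat) \<Rightarrow> nat \<Rightarrow> 'a list"
where
  "sample_list \<kappa> \<Phi> c p 0 = []"
| "sample_list \<kappa> \<Phi> c p (Suc n) =
     (let Z = sample_list \<kappa> \<Phi> c p n;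
          i = tie_argmax (\<lambda>i. \<Phi> (c (Suc n) i) (set Z)) {..<\<kappa> (Suc n)} (p (Suc n))
      in Z @ [c (Suc n) i])"

definition nn_predict :: "('a::metric_space \<Rightarrow> 'b) \<Rightarrow> 'a list \<Rightarrow> (nat \<Rightarrow> nat) \<Rightarrow> 'a \<Rightarrow> 'b" where
  "nn_predict f Zs q x = f (Zs ! tie_argmin (\<lambda>i. dist x (Zs ! i)) {..<length Zs} q)"

text \<open>The randomness used at step n: the kappa n candidates (i.i.d. mu), a uniformly random
  permutation of the candidate indices (tie-breaking in the selection) and a uniformly random
  permutation of {..<n} (tie-breaking in the nearest-neighbour prediction zeta_n).\<close>
definition step_measure ::
  "'a measure \<Rightarrow> (nat \<Rightarrow> nat) \<Rightarrow> nat \<Rightarrow> ((nat \<Rightarrow> 'a) \<times> (nat \<Rightarrow> nat) \<times> (nat \<Rightarrow> nat)) measure" where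
  "step_measure \<mu> \<kappa> n =
     (PiM {..<\<kappa> n} (\<lambda>_. \<mu>)) \<Otimes>\<^sub>M
       (measure_pmf (pmf_of_set {p. p permutes {..<\<kappa> n}}) \<Otimes>\<^sub>M
        measure_pmf (pmf_of_set {q. q permutes {..<n}}))"

end

theory Submission
  imports Defs
begin

lemma tie_argmax_mem:
  fixes v :: "'i \<Rightarrow> 'v::linorder"
  assumes "finite I" "I \<noteq> {}"
  shows "tie_argmax v I p \<in> I"
proof -
  have "Max (v ` I) \<in> v ` I" using assms by (intro Max_in) auto
  then obtain i where i: "i \<in> I" "v i = Max (v ` I)" by auto
  have "i \<in> {i \<in> I. \<forall>j\<in>I. v j \<le> v i}" using i assms by auto
  hence "arg_min_on p {i \<in> I. \<forall>j\<in>I. v j \<le> v i} \<in> {i \<in> I. \<forall>j\<in>I. v j \<le> v i}"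
    using assms by (intro arg_min_if_finite(1)) auto
  thus ?thesis unfolding tie_argmax_def by auto
qed

lemma tie_argmin_prop:
  fixes v :: "'i \<Rightarrow> 'v::linorder"
  assumes "finite I" "I \<noteq> {}"
  shows "tie_argmin v I p \<in> I \<and> (\<forall>j\<in>I. v (tie_argmin v I p) \<le> v j)"
proof -
  have "Min (v ` I) \<in> v ` I" using assms by (intro Min_in) auto
  then obtain i where i: "i \<in> I" "v i = Min (v ` I)" by auto
  have "i \<in> {i \<in> I. \<forall>j\<in>I. v i \<le> v j}" using i assms by auto
  hence "arg_min_on p {i \<in> I. \<forall>j\<in>I. v i \<le> v j} \<in> {i \<in> I. \<forall>j\<in>I. v i \<le> v j}"
    using assms by (intro arg_min_if_finite(1)) auto
  thus ?thesis unfolding tie_argmin_def by auto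
qed

lemma sample_list_length: "length (sample_list \<kappa> \<Phi> c p n) = n"
  by (induction n) (auto simp: Let_def)

lemma sample_list_mono:
  assumes "n \<le> m"
  shows "set (sample_list \<kappa> \<Phi> c p n) \<subseteq> set (sample_list \<kappa> \<Phi> c p m)"
  using assms
proof (induction m)
  case 0 thus ?case by simp
next
  case (Suc m)
  show ?case
  proof (cases "n = Suc m")
    case False
    hence "n \<le> m" using Suc by auto
    thus ?thesis using Suc by (auto simp: Let_def)
  qed simp
qed

lemma sample_list_elems:
  assumes "\<forall>n\<ge>1. \<kappa> n \<ge> 1"
  shows "\<forall>z\<in>set (sample_list \<kappa> \<Phi> c p n). \<exists>k i. 1 \<le> k \<and> i < \<kappa> k \<and> z = c k i"
proof (induction n)
  case 0 thus ?case by simp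
next
  case (Suc n)
  have "tie_argmax (\<lambda>i. \<Phi> (c (Suc n) i) (set (sample_list \<kappa> \<Phi> c p n))) {..<\<kappa> (Suc n)} (p (Suc n))
        \<in> {..<\<kappa> (Suc n)}"
  proof (rule tie_argmax_mem)
    have "\<kappa> (Suc n) \<ge> 1" using assms by auto
    thus "{..<\<kappa> (Suc n)} \<noteq> {}" by (metis lessThan_iff less_eq_Suc_le One_nat_def empty_iff)
  qed simp
  thus ?case using Suc by (auto simp: Let_def)
qed

lemma sample_list_last:
  assumes "\<forall>n\<ge>1. \<kappa> n \<ge> 1" "n \<ge> 1" "\<forall>i<\<kappa> n. c n i \<in> B"
  shows "\<exists>z\<in>set (sample_list \<kappa> \<Phi> c p n). z \<in> B"
proof -
  obtain m where m: "n = Suc m" using assms(2) by (cases n) auto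
  have "tie_argmax (\<lambda>i. \<Phi> (c (Suc m) i) (set (sample_list \<kappa> \<Phi> c p m))) {..<\<kappa> (Suc m)} (p (Suc m))
        \<in> {..<\<kappa> (Suc m)}"
  proof (rule tie_argmax_mem)
    have "\<kappa> (Suc m) \<ge> 1" using assms by auto
    thus "{..<\<kappa> (Suc m)} \<noteq> {}" by (metis lessThan_iff less_eq_Suc_le One_nat_def empty_iff)
  qed simp
  thus ?thesis using assms m by (auto simp: Let_def)
qed


lemma step_prob: "prob_space (step_measure \<mu> \<kappa> n)" if "prob_space \<mu>"
  unfolding step_measure_def
  using that by (intro prob_space_pair prob_space_PiM prob_space_measure_pmf) auto

lemma distr_fst_step:
  assumes "prob_space \<mu>"
  shows "distr (step_measure \<mu> \<kappa> n) (PiM {..<\<kappa> n} (\<lambda>_. \<mu>)) fst = PiM {..<\<kappa> n} (\<lambda>_. \<mu>)"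
proof -
  interpret P: prob_space "measure_pmf (pmf_of_set {p. p permutes {..<\<kappa> n}}) \<Otimes>\<^sub>M
        measure_pmf (pmf_of_set {q. q permutes {..<n}})"
    by (intro prob_space_pair prob_space_measure_pmf)
  show ?thesis unfolding step_measure_def by (rule P.distr_pair_fst)
qed

theorem theorem1:
  fixes \<mu> :: "'a::metric_space measure"
    and Y :: "'b set"
    and f :: "'a \<Rightarrow> 'b"
    and \<kappa> :: "nat \<Rightarrow> nat"
    and M :: "'w measure"
    and W :: "nat \<Rightarrow> 'w \<Rightarrow> (nat \<Rightarrow> 'a) \<times> (nat \<Rightarrow> nat) \<times> (nat \<Rightarrow> nat)"
    and x :: 'a
  assumes mu_prob: "prob_space \<mu>"
    and mu_borel: "sets \<mu> = sets borel"
    and Y_countable: "countable Y"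
    and f_into: "\<forall>a. f a \<in> Y"
    and f_meas: "\<forall>y\<in>Y. f -` {y} \<in> sets \<mu>"
    and kappa_pos: "\<forall>n\<ge>1. \<kappa> n \<ge> 1"
    and kappa_div: "\<forall>\<rho>::real. 0 < \<rho> \<and> \<rho> \<le> 1 \<longrightarrow> \<not> summable (\<lambda>n. \<rho> ^ \<kappa> (Suc n))"
    and M_prob: "prob_space M"
    and W_indep: "prob_space.indep_vars M (step_measure \<mu> \<kappa>) W {1..}"
    and W_distr: "\<forall>n\<ge>1. distr M (step_measure \<mu> \<kappa> n) (W n) = step_measure \<mu> \<kappa> n"
    and x_supp: "x \<in> mu_support \<mu>"
    and x_nonbdry: "\<not> f_boundary_point \<mu> f x"
  shows "AE \<omega> in M. eventually (\<lambda>n.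
           nn_predict f
             (sample_list \<kappa> dist_to_set (\<lambda>m. fst (W m \<omega>)) (\<lambda>m. fst (snd (W m \<omega>))) n)
             (snd (snd (W n \<omega>))) x = f x) sequentially"
proof -
  interpret M: prob_space M by (rule M_prob)
  interpret mu: prob_space \<mu> by (rule mu_prob)
  have space_mu: "space \<mu> = UNIV" using sets_eq_imp_space_eq[OF mu_borel] by simp
  obtain \<epsilon> where eps: "\<epsilon> > 0" and N0: "measure \<mu> (ball x \<epsilon> \<inter> (space \<mu> - f -` {f x})) = 0"
    using x_nonbdry measure_nonneg[of \<mu>] unfolding f_boundary_point_def
    by (metis linorder_not_less order_antisym)
  define N where "N = ball x \<epsilon> \<inter> (space \<mu> - f -` {f x})"
  define B where "B = ball x \<epsilon>"
  have B_sets: "B \<in> sets \<mu>" unfolding B_def using mu_borel by simp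
  have N_sets: "N \<in> sets \<mu>" unfolding N_def using B_sets f_meas f_into B_def by auto
  have N_null: "N \<in> null_sets \<mu>" using N_sets N0 unfolding N_def
    by (simp add: mu.emeasure_eq_measure null_sets_def)
  define \<rho> where "\<rho> = measure \<mu> B"
  have rho_pos: "\<rho> > 0" using x_supp eps unfolding \<rho>_def B_def mu_support_def by auto
  have rho_le: "\<rho> \<le> 1" unfolding \<rho>_def by simp
  have Wm: "W n \<in> measurable M (step_measure \<mu> \<kappa> n)" if "n \<ge> 1" for n
    using W_indep that unfolding M.indep_vars_def by auto
  let ?P = "PiM {..<\<kappa> n} (\<lambda>_. \<mu>)" 
  have distr_fstW: "distr M (PiM {..<\<kappa> n} (\<lambda>_. \<mu>)) (\<lambda>\<omega>. fst (W n \<omega>)) = PiM {..<\<kappa> n} (\<lambda>_. \<mu>)"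
    if "n \<ge> 1" for n
  proof -
    have "distr M (PiM {..<\<kappa> n} (\<lambda>_. \<mu>)) (\<lambda>\<omega>. fst (W n \<omega>)) =
          distr (distr M (step_measure \<mu> \<kappa> n) (W n)) (PiM {..<\<kappa> n} (\<lambda>_. \<mu>)) fst"
      using Wm[OF that, unfolded step_measure_def]
      by (subst distr_distr) (auto simp: step_measure_def comp_def)
    also have "\<dots> = PiM {..<\<kappa> n} (\<lambda>_. \<mu>)"
      using W_distr that distr_fst_step[OF mu_prob] by simp
    finally show ?thesis .
  qed
  have fstW_meas: "(\<lambda>\<omega>. fst (W n \<omega>)) \<in> measurable M (PiM {..<\<kappa> n} (\<lambda>_. \<mu>))" if "n \<ge> 1" for n
    using Wm[OF that] unfolding step_measure_def by measurable
  have AE1: "AE \<omega> in M. \<forall>k\<in>{1..}. \<forall>i\<in>{..<\<kappa> k}. fst (W k \<omega>) i \<notin> N"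
  proof (subst AE_ball_countable, simp, intro ballI, subst AE_ball_countable, simp, intro ballI)
    fix k i assume k: "k \<in> {1::nat..}" and i: "i \<in> {..<\<kappa> k}"
    have "distr M \<mu> (\<lambda>\<omega>. fst (W k \<omega>) i) = distr (distr M (PiM {..<\<kappa> k} (\<lambda>_. \<mu>)) (\<lambda>\<omega>. fst (W k \<omega>))) \<mu> (\<lambda>g. g i)"
      using k i fstW_meas[of k] by (subst distr_distr) (auto simp: comp_def)
    also have "\<dots> = \<mu>" using k i distr_fstW[of k] distr_PiM_component[of "{..<\<kappa> k}" "\<lambda>_. \<mu>" i] mu_prob by simp
    finally have D: "distr M \<mu> (\<lambda>\<omega>. fst (W k \<omega>) i) = \<mu>" .
    have "AE y in \<mu>. y \<notin> N" by (rule AE_not_in[OF N_null])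
    hence "AE y in distr M \<mu> (\<lambda>\<omega>. fst (W k \<omega>) i). y \<notin> N" unfolding D .
    thus "AE \<omega> in M. fst (W k \<omega>) i \<notin> N"
      by (rule AE_distrD[rotated]) (use k i fstW_meas[of k] in auto)
  qed
  have AE2: "AE \<omega> in M. \<exists>n\<ge>1. \<forall>i<\<kappa> n. fst (W n \<omega>) i \<in> B"
  proof -
    define PB where "PB n = PiE {..<\<kappa> n} (\<lambda>_. B)" for n
    have PB_sets: "PB n \<in> sets (PiM {..<\<kappa> n} (\<lambda>_. \<mu>))" for n
      unfolding PB_def using B_sets by (intro sets_PiM_I_finite) auto
    define Eg where "Eg n = {\<omega>\<in>space M. fst (W n \<omega>) \<in> PB n}" for n
    define Eb where "Eb n = {\<omega>\<in>space M. \<not> fst (W n \<omega>) \<in> PB n}" for n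
    have Eg_sets: "Eg n \<in> sets M" if "n \<ge> 1" for n
    proof -
      have "Eg n = (\<lambda>\<omega>. fst (W n \<omega>)) -` PB n \<inter> space M" unfolding Eg_def by auto
      thus ?thesis using measurable_sets[OF fstW_meas[OF that] PB_sets] by simp
    qed
    have Eb_eq: "Eb n = space M - Eg n" for n unfolding Eb_def Eg_def by auto
    have prob_Eg: "M.prob (Eg n) = \<rho> ^ \<kappa> n" if "n \<ge> 1" for n
    proof -
      have "Eg n = (\<lambda>\<omega>. fst (W n \<omega>)) -` PB n \<inter> space M" unfolding Eg_def by auto
      hence "M.prob (Eg n) = measure (distr M (PiM {..<\<kappa> n} (\<lambda>_. \<mu>)) (\<lambda>\<omega>. fst (W n \<omega>))) (PB n)"
        using measure_distr[OF fstW_meas[OF that] PB_sets] by simp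
      also have "\<dots> = measure (PiM {..<\<kappa> n} (\<lambda>_. \<mu>)) (PB n)" using distr_fstW[OF that] by simp
      also have "\<dots> = (\<Prod>i\<in>{..<\<kappa> n}. measure \<mu> B)"
      proof -
        interpret F: finite_product_prob_space "\<lambda>_. \<mu>" "{..<\<kappa> n}"
          by unfold_locales auto
        show ?thesis unfolding PB_def by (rule F.finite_measure_PiM_emb) (use B_sets in auto)
      qed
      finally show ?thesis unfolding \<rho>_def by simp
    qed
    have prob_Eb: "M.prob (Eb n) = 1 - \<rho> ^ \<kappa> n" if "n \<ge> 1" for n
      unfolding Eb_eq using M.prob_compl[OF Eg_sets[OF that]] prob_Eg[OF that] by simp
    have indep: "M.indep_events Eb {1..}"
      unfolding Eb_def
    proof (rule M.indep_eventsI_indep_vars[OF W_indep])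
      fix n :: nat assume n: "n \<in> {1..}"
      have "fst \<in> measurable (step_measure \<mu> \<kappa> n) (PiM {..<\<kappa> n} (\<lambda>_. \<mu>))"
        unfolding step_measure_def by simp
      hence "fst -` PB n \<inter> space (step_measure \<mu> \<kappa> n) \<in> sets (step_measure \<mu> \<kappa> n)"
        using PB_sets by (rule measurable_sets)
      hence "space (step_measure \<mu> \<kappa> n) - (fst -` PB n \<inter> space (step_measure \<mu> \<kappa> n)) \<in> sets (step_measure \<mu> \<kappa> n)"
        by auto
      moreover have "{w \<in> space (step_measure \<mu> \<kappa> n). \<not> fst w \<in> PB n} =
          space (step_measure \<mu> \<kappa> n) - (fst -` PB n \<inter> space (step_measure \<mu> \<kappa> n))" by auto
      ultimately show "{w \<in> space (step_measure \<mu> \<kappa> n). \<not> fst w \<in> PB n} \<in> sets (step_measure \<mu> \<kappa> n)"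
        by simp
    qed
    define G where "G = (\<Inter>n\<in>{1::nat..}. Eb n)"
    have Eb_sets: "Eb n \<in> sets M" if "n \<ge> 1" for n using Eg_sets[OF that] unfolding Eb_eq by auto
    have G_sets: "G \<in> sets M" unfolding G_def using Eb_sets by (intro sets.countable_INT) auto
    have unb: "\<exists>N. Bd < (\<Sum>n<N. \<rho> ^ \<kappa> (Suc n))" for Bd
    proof (rule ccontr)
      assume "\<not> ?thesis"
      hence "summable (\<lambda>n. \<rho> ^ \<kappa> (Suc n))"
        using rho_pos by (intro summableI_nonneg_bounded[where x=Bd]) (auto simp: not_less)
      thus False using kappa_div rho_pos rho_le by auto
    qed
    have Gbound: "M.prob G \<le> exp (- (\<Sum>n<N. \<rho> ^ \<kappa> (Suc n)))" if "N \<ge> 1" for N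
    proof -
      have "M.prob G \<le> M.prob (\<Inter>n\<in>{1..N}. Eb n)"
        using Eb_sets that unfolding G_def by (intro M.finite_measure_mono) auto
      also have "\<dots> = (\<Prod>n\<in>{1..N}. M.prob (Eb n))"
        using indep that unfolding M.indep_events_def by (auto)
      also have "\<dots> = (\<Prod>n\<in>{1..N}. 1 - \<rho> ^ \<kappa> n)" using prob_Eb by simp
      also have "\<dots> \<le> (\<Prod>n\<in>{1..N}. exp (- (\<rho> ^ \<kappa> n)))"
      proof (rule prod_mono)
        fix n assume "n \<in> {1..N}"
        have "\<rho> ^ \<kappa> n \<le> 1" using rho_pos rho_le by (simp add: power_le_one)
        moreover have "1 + (- (\<rho> ^ \<kappa> n)) \<le> exp (- (\<rho> ^ \<kappa> n))" by (rule exp_ge_add_one_self)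
        ultimately show "0 \<le> 1 - \<rho> ^ \<kappa> n \<and> 1 - \<rho> ^ \<kappa> n \<le> exp (- (\<rho> ^ \<kappa> n))" by simp
      qed
      also have "\<dots> = exp (- (\<Sum>n\<in>{1..N}. \<rho> ^ \<kappa> n))"
        by (simp add: exp_sum[symmetric] sum_negf)
      also have "(\<Sum>n\<in>{1..N}. \<rho> ^ \<kappa> n) = (\<Sum>n<N. \<rho> ^ \<kappa> (Suc n))"
        by (rule sum_bounds_lt_plus1[symmetric])
      finally show ?thesis .
    qed
    have "M.prob G = 0"
    proof (rule ccontr)
      assume "M.prob G \<noteq> 0"
      hence pG: "M.prob G > 0" using measure_nonneg[of M G] by linarith
      obtain N where N: "- ln (M.prob G) < (\<Sum>n<N. \<rho> ^ \<kappa> (Suc n))" using unb by blast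
      have "M.prob G \<le> 1" by simp
      hence "- ln (M.prob G) \<ge> 0" using pG by simp
      hence "N \<ge> 1" using N by (cases N) auto
      hence "M.prob G \<le> exp (- (\<Sum>n<N. \<rho> ^ \<kappa> (Suc n)))" by (rule Gbound)
      also have "\<dots> < exp (ln (M.prob G))" using N by simp
      also have "\<dots> = M.prob G" using pG by simp
      finally show False by simp
    qed
    hence "G \<in> null_sets M" using G_sets by (simp add: M.emeasure_eq_measure null_sets_def)
    hence "AE \<omega> in M. \<omega> \<notin> G" by (rule AE_not_in)
    thus ?thesis
    proof (rule AE_mp[OF _ AE_I2])
      fix \<omega> assume "\<omega> \<in> space M"
      thus "\<omega> \<notin> G \<longrightarrow> (\<exists>n\<ge>1. \<forall>i<\<kappa> n. fst (W n \<omega>) i \<in> B)"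
        unfolding G_def Eb_def PB_def by (auto simp: PiE_iff)
    qed
  qed
  show ?thesis
    using AE1 AE2
  proof eventually_elim
    case (elim \<omega>)
    define c where "c = (\<lambda>m. fst (W m \<omega>))"
    define p where "p = (\<lambda>m. fst (snd (W m \<omega>)))"
    from elim obtain n where n: "n \<ge> 1" "\<forall>i<\<kappa> n. c n i \<in> B" unfolding c_def by auto
    obtain z where z: "z \<in> set (sample_list \<kappa> dist_to_set c p n)" "z \<in> B"
      using sample_list_last[of \<kappa> n c B dist_to_set p] kappa_pos n by blast
    show ?case
    proof (rule eventually_sequentiallyI[of n])
      fix m assume m: "n \<le> m"
      define Zs where "Zs = sample_list \<kappa> dist_to_set c p m"
      have zZ: "z \<in> set Zs" using sample_list_mono[OF m, of \<kappa> dist_to_set c p] z unfolding Zs_def by blast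
      have lenZ: "length Zs = m" unfolding Zs_def by (rule sample_list_length)
      define j where "j = tie_argmin (\<lambda>i. dist x (Zs ! i)) {..<length Zs} (snd (snd (W m \<omega>)))"
      have "0 < length Zs" using lenZ m n by linarith
      hence "{..<length Zs} \<noteq> {}" by (metis lessThan_iff empty_iff)
      hence jprop: "j \<in> {..<length Zs} \<and> (\<forall>i\<in>{..<length Zs}. dist x (Zs ! j) \<le> dist x (Zs ! i))"
        unfolding j_def by (intro tie_argmin_prop) auto
      obtain i0 where i0: "i0 < length Zs" "Zs ! i0 = z" using zZ by (auto simp: in_set_conv_nth)
      have "dist x (Zs ! j) \<le> dist x z" using jprop i0 by auto
      also have "\<dots> < \<epsilon>" using z(2) unfolding B_def by (simp add: dist_commute)
      finally have inball: "Zs ! j \<in> ball x \<epsilon>" by (simp add: dist_commute)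
      have "j < length Zs" using jprop by simp
      hence "Zs ! j \<in> set Zs" by (rule nth_mem)
      moreover have "\<forall>z\<in>set Zs. \<exists>k i. 1 \<le> k \<and> i < \<kappa> k \<and> z = c k i"
        unfolding Zs_def by (rule sample_list_elems[OF kappa_pos])
      ultimately obtain k i where ki: "1 \<le> k" "i < \<kappa> k" "Zs ! j = c k i"
        by blast
      hence "Zs ! j \<notin> N" using elim unfolding c_def by auto
      hence "f (Zs ! j) = f x" using inball unfolding N_def space_mu by auto
      thus "nn_predict f (sample_list \<kappa> dist_to_set (\<lambda>m. fst (W m \<omega>)) (\<lambda>m. fst (snd (W m \<omega>))) m)
             (snd (snd (W m \<omega>))) x = f x"
        unfolding nn_predict_def c_def[symmetric] p_def[symmetric] Zs_def[symmetric] j_def[symmetric] .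
    qed
  qed
qed

end
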